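(* A numerical semigroup $S$ with multiplicity $e$ and blowup $B$ is additive if and only if ${\rm adj}(S)=\operatorname{Ap}(B;e)$.
   Context: $S$ is a numerical semigroup (a submonoid of $\mathbb N$ with finite complement) with minimal generators $e<a_1<\dots<a_t$. ${\rm ord}(n;S)$ is the maximum of $\sum c_i$ over $(c_0,\dots,c_t)\in\mathbb N^{t+1}$ with $c_0e+\sum c_ia_i=n$. $S$ is additive if ${\rm ord}(u+e;S)={\rm ord}(u;S)+1$ for all $u\in S$. ${\rm adj}(S)=\{s-{\rm ord}(s;S)e:s\in S\}$. The blowup is $B=\langle e,a_1-e,\dots,a_t-e\rangle$, and $\operatorname{Ap}(B;e)=\{w\in B:w-e\notin B\}$. *)

theory Defs
  imports Main
begin

definition numerical_semigroup :: "nat set \<Rightarrow> bool" where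
  "numerical_semigroup S \<longleftrightarrow> 0 \<in> S \<and> (\<forall>x\<in>S. \<forall>y\<in>S. x + y \<in> S) \<and> finite (UNIV - S)"

definition min_gens :: "nat set \<Rightarrow> nat set" where
  "min_gens S = {a \<in> S. a \<noteq> 0 \<and> \<not> (\<exists>x\<in>S. \<exists>y\<in>S. x \<noteq> 0 \<and> y \<noteq> 0 \<and> a = x + y)}"

text \<open>Multiplicity e: the smallest minimal generator (= smallest nonzero element).\<close>
definition multiplicity :: "nat set \<Rightarrow> nat" where
  "multiplicity S = Min (min_gens S)"

definition ord :: "nat \<Rightarrow> nat set \<Rightarrow> nat" where
  "ord n S = Max {(\<Sum>g\<in>min_gens S. c g) | c :: nat \<Rightarrow> nat.
                    (\<Sum>g\<in>min_gens S. c g * g) = n}"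

definition additive :: "nat set \<Rightarrow> bool" where
  "additive S \<longleftrightarrow> (\<forall>u\<in>S. ord (u + multiplicity S) S = ord u S + 1)"

definition adj :: "nat set \<Rightarrow> nat set" where
  "adj S = {s - ord s S * multiplicity S | s. s \<in> S}"

inductive_set monoid_gen :: "nat set \<Rightarrow> nat set" for A :: "nat set" where
  zero: "0 \<in> monoid_gen A"
| step: "x \<in> monoid_gen A \<Longrightarrow> a \<in> A \<Longrightarrow> x + a \<in> monoid_gen A"

definition blowup :: "nat set \<Rightarrow> nat set" where
  "blowup S = monoid_gen ({multiplicity S} \<union> (\<lambda>a. a - multiplicity S) ` (min_gens S - {multiplicity S}))"

text \<open>Apery set Ap(B;e) = {w in B : w - e not in B} (w - e taken in the integers).\<close>
definition apery :: "nat set \<Rightarrow> nat \<Rightarrow> nat set" where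
  "apery B e = {w \<in> B. \<not> (e \<le> w \<and> w - e \<in> B)}"

end

theory Submission
  imports Defs
begin

definition RR :: "nat set \<Rightarrow> nat \<Rightarrow> nat set" where
  "RR S n = {(\<Sum>g\<in>min_gens S. c g) | c :: nat \<Rightarrow> nat. (\<Sum>g\<in>min_gens S. c g * g) = n}"

lemma ord_RR: "ord n S = Max (RR S n)"
  unfolding ord_def RR_def by simp

lemma nat_lem: "(s::nat) - P - E = y - M \<Longrightarrow> M \<le> y \<Longrightarrow> E \<le> s - P \<Longrightarrow> P \<le> s \<Longrightarrow> s + M = y + (P + E)"
  by arith

locale nsg =
  fixes S :: "nat set"
  assumes ns: "numerical_semigroup S"
begin

lemma zeroS: "0 \<in> S" using ns unfolding numerical_semigroup_def by blast
lemma addS: "x \<in> S \<Longrightarrow> y \<in> S \<Longrightarrow> x + y \<in> S" using ns unfolding numerical_semigroup_def by blast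
lemma finS: "finite (UNIV - S)" using ns unfolding numerical_semigroup_def by blast

lemma ex_nz: "\<exists>x\<in>S. x \<noteq> 0"
proof (rule ccontr)
  assume "\<not> ?thesis"
  then have "UNIV - {0::nat} \<subseteq> UNIV - S" by auto
  moreover have "infinite (UNIV - {0::nat})" by simp
  ultimately show False using finS finite_subset by blast
qed

definition e where "e = (LEAST x. x \<in> S \<and> x \<noteq> 0)"

lemma e_prop: "e \<in> S" "e \<noteq> 0"
  using LeastI_ex[of "\<lambda>x. x \<in> S \<and> x \<noteq> 0"] ex_nz unfolding e_def by auto

lemma e_le: "x \<in> S \<Longrightarrow> x \<noteq> 0 \<Longrightarrow> e \<le> x"
  unfolding e_def by (rule Least_le) simp

lemma e_mg: "e \<in> min_gens S"
  unfolding min_gens_def using e_prop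
  by (auto dest: e_le)

lemma mg_S: "g \<in> min_gens S \<Longrightarrow> g \<in> S" unfolding min_gens_def by auto
lemma mg_nz: "g \<in> min_gens S \<Longrightarrow> g \<noteq> 0" unfolding min_gens_def by auto
lemma mg_ge: "g \<in> min_gens S \<Longrightarrow> e \<le> g" using mg_S mg_nz e_le by auto

lemma mg_fin: "finite (min_gens S)"
proof -
  have "min_gens S \<subseteq> {e} \<union> (\<lambda>x. x + e) ` (UNIV - S)"
  proof
    fix g assume g: "g \<in> min_gens S"
    show "g \<in> {e} \<union> (\<lambda>x. x + e) ` (UNIV - S)"
    proof (cases "g = e")
      case False
      with mg_ge[OF g] have lt: "e < g" by simp
      have "g - e \<notin> S"
      proof
        assume "g - e \<in> S"
        moreover have "g - e \<noteq> 0" "g = (g - e) + e" using lt by auto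
        ultimately have "\<exists>x\<in>S. \<exists>y\<in>S. x \<noteq> 0 \<and> y \<noteq> 0 \<and> g = x + y"
          using e_prop by blast
        then show False using g unfolding min_gens_def by blast
      qed
      then have "g = (g - e) + e \<and> g - e \<in> UNIV - S" using lt by simp
      then show ?thesis by blast
    qed simp
  qed
  moreover have "finite ({e} \<union> (\<lambda>x. x + e) ` (UNIV - S))" using finS by simp
  ultimately show ?thesis using finite_subset by blast
qed

lemma mult_e: "multiplicity S = e"
  unfolding multiplicity_def using mg_fin e_mg mg_ge by (intro Min_eqI) auto

lemma RR_fin: "finite (RR S n)"
proof -
  have "RR S n \<subseteq> {..n}"
  proof
    fix r assume "r \<in> RR S n"
    then obtain c where r: "r = (\<Sum>g\<in>min_gens S. c g)" and n: "(\<Sum>g\<in>min_gens S. c g * g) = n"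
      unfolding RR_def by auto
    have "(\<Sum>g\<in>min_gens S. c g) \<le> (\<Sum>g\<in>min_gens S. c g * g)"
    proof (rule sum_mono)
      fix g assume "g \<in> min_gens S"
      then have "1 \<le> g" using mg_nz by (simp add: Suc_le_eq)
      then show "c g \<le> c g * g" using mult_le_mono2[of 1 g "c g"] by simp
    qed
    then show "r \<in> {..n}" using r n by simp
  qed
  then show ?thesis using finite_subset by blast
qed

lemma RR_le: "r \<in> RR S n \<Longrightarrow> r * e \<le> n"
proof -
  assume "r \<in> RR S n"
  then obtain c where r: "r = (\<Sum>g\<in>min_gens S. c g)" and n: "(\<Sum>g\<in>min_gens S. c g * g) = n"
    unfolding RR_def by auto
  have "r * e = (\<Sum>g\<in>min_gens S. c g * e)" using r by (simp add: sum_distrib_right)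
  also have "\<dots> \<le> (\<Sum>g\<in>min_gens S. c g * g)"
    by (rule sum_mono) (use mg_ge in auto)
  finally show ?thesis using n by simp
qed

lemma RR_add: "r1 \<in> RR S u \<Longrightarrow> r2 \<in> RR S v \<Longrightarrow> r1 + r2 \<in> RR S (u + v)"
proof -
  assume "r1 \<in> RR S u" "r2 \<in> RR S v"
  then obtain c1 c2 where a: "r1 = (\<Sum>g\<in>min_gens S. c1 g)" "(\<Sum>g\<in>min_gens S. c1 g * g) = u"
    and b: "r2 = (\<Sum>g\<in>min_gens S. c2 g)" "(\<Sum>g\<in>min_gens S. c2 g * g) = v"
    unfolding RR_def by auto
  have "r1 + r2 = (\<Sum>g\<in>min_gens S. c1 g + c2 g)" using a b by (simp add: sum.distrib)
  moreover have "(\<Sum>g\<in>min_gens S. (c1 g + c2 g) * g) = u + v"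
    using a b by (simp add: sum.distrib distrib_right)
  ultimately show ?thesis unfolding RR_def by blast
qed

lemma RR_gen: "g \<in> min_gens S \<Longrightarrow> 1 \<in> RR S g"
proof -
  assume g: "g \<in> min_gens S"
  define c where "c = (\<lambda>h::nat. if h = g then (1::nat) else 0)"
  have h1: "(\<Sum>h\<in>min_gens S. c h) = 1" unfolding c_def using g mg_fin by simp
  have "(\<Sum>h\<in>min_gens S. c h * h) = (\<Sum>h\<in>min_gens S. if h = g then g else 0)"
    unfolding c_def by (rule sum.cong) auto
  also have "\<dots> = g" using g mg_fin by simp
  finally have h2: "(\<Sum>h\<in>min_gens S. c h * h) = g" .
  show ?thesis unfolding RR_def by (rule CollectI, rule exI[of _ c]) (use h1 h2 in simp)
qed

lemma RR_0: "0 \<in> RR S 0"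
  unfolding RR_def by (rule CollectI, rule exI[of _ "\<lambda>_. 0"]) simp

lemma RR_ne: "s \<in> S \<Longrightarrow> RR S s \<noteq> {}"
proof (induction s rule: less_induct)
  case (less s)
  show ?case
  proof (cases "s = 0")
    case True then show ?thesis using RR_0 by auto
  next
    case False
    show ?thesis
    proof (cases "s \<in> min_gens S")
      case True then show ?thesis using RR_gen by auto
    next
      case nm: False
      then obtain x y where xy: "x \<in> S" "y \<in> S" "x \<noteq> 0" "y \<noteq> 0" "s = x + y"
        using less.prems False unfolding min_gens_def by auto
      then have "RR S x \<noteq> {}" "RR S y \<noteq> {}" using less.IH by auto
      then obtain r1 r2 where "r1 \<in> RR S x" "r2 \<in> RR S y" by blast
      then show ?thesis using RR_add xy(5) by blast
    qed
  qed
qed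

lemma ord_in: "s \<in> S \<Longrightarrow> ord s S \<in> RR S s"
  unfolding ord_RR using RR_fin RR_ne by (rule Max_in)

lemma ord_ge: "s \<in> S \<Longrightarrow> r \<in> RR S s \<Longrightarrow> r \<le> ord s S"
  unfolding ord_RR using RR_fin by (rule Max_ge)

lemma ord_le: "s \<in> S \<Longrightarrow> ord s S * e \<le> s"
  by (rule RR_le[OF ord_in])

lemma ord_gen: "u \<in> S \<Longrightarrow> g \<in> min_gens S \<Longrightarrow> ord u S + 1 \<le> ord (u + g) S"
proof -
  assume u: "u \<in> S" and g: "g \<in> min_gens S"
  have "ord u S + 1 \<in> RR S (u + g)" using RR_add[OF ord_in[OF u] RR_gen[OF g]] .
  then show ?thesis using ord_ge[OF addS[OF u mg_S[OF g]]] by simp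
qed

lemma keS: "k * e \<in> S"
  by (induction k) (auto simp: zeroS addS e_prop)

definition A where "A = {e} \<union> (\<lambda>a. a - e) ` (min_gens S - {e})"

lemma blowup_eq: "blowup S = monoid_gen A"
  unfolding blowup_def A_def mult_e ..

lemma mg_add: "y \<in> monoid_gen A \<Longrightarrow> x \<in> monoid_gen A \<Longrightarrow> x + y \<in> monoid_gen A"
proof (induction y rule: monoid_gen.induct)
  case zero then show ?case by simp
next
  case (step y a)
  then have "x + y \<in> monoid_gen A" by simp
  then have "(x + y) + a \<in> monoid_gen A" using monoid_gen.step[of "x + y" A a] step by simp
  then show ?case by (simp add: add.assoc)
qed

lemma mg_mult: "x \<in> monoid_gen A \<Longrightarrow> k * x \<in> monoid_gen A"
  by (induction k) (auto intro: monoid_gen.zero mg_add)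

lemma mg_sum: "finite I \<Longrightarrow> (\<forall>i\<in>I. f i \<in> monoid_gen A) \<Longrightarrow> sum f I \<in> monoid_gen A"
  by (induction I rule: finite_induct) (auto intro: monoid_gen.zero mg_add)

lemma gen_in: "g \<in> min_gens S \<Longrightarrow> g - e \<in> monoid_gen A"
proof (cases "g = e")
  case True then show ?thesis by (simp add: monoid_gen.zero)
next
  case False
  assume "g \<in> min_gens S"
  then have "g - e \<in> A" using False unfolding A_def by blast
  then show ?thesis using monoid_gen.step[OF monoid_gen.zero] by fastforce
qed

lemma e_in: "e \<in> monoid_gen A"
  using monoid_gen.step[OF monoid_gen.zero, of e A] unfolding A_def by simp

lemma B_intro: "s \<in> S \<Longrightarrow> m \<le> ord s S \<Longrightarrow> s - m * e \<in> monoid_gen A"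
proof -
  assume s: "s \<in> S" and m: "m \<le> ord s S"
  define r where "r = ord s S"
  have "r \<in> RR S s" using ord_in[OF s] r_def by simp
  then obtain c where r: "r = (\<Sum>g\<in>min_gens S. c g)" and n: "(\<Sum>g\<in>min_gens S. c g * g) = s"
    unfolding RR_def by auto
  have "(\<Sum>g\<in>min_gens S. c g * g) = (\<Sum>g\<in>min_gens S. c g * (g - e) + c g * e)"
    by (rule sum.cong) (auto simp: mg_ge simp flip: distrib_left)
  also have "\<dots> = (\<Sum>g\<in>min_gens S. c g * (g - e)) + r * e"
    by (simp add: sum.distrib r sum_distrib_right)
  finally have eq: "s = (\<Sum>g\<in>min_gens S. c g * (g - e)) + r * e" using n by simp
  have "m * e \<le> r * e" using m r_def by simp
  then have "s - m * e = (\<Sum>g\<in>min_gens S. c g * (g - e)) + (r - m) * e"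
    using eq by (simp add: diff_mult_distrib)
  moreover have "(\<Sum>g\<in>min_gens S. c g * (g - e)) \<in> monoid_gen A"
    using mg_fin by (intro mg_sum) (auto intro: mg_mult gen_in)
  moreover have "(r - m) * e \<in> monoid_gen A" using e_in mg_mult by blast
  ultimately show ?thesis using mg_add by simp
qed

lemma B_elim: "x \<in> monoid_gen A \<Longrightarrow> \<exists>s m. s \<in> S \<and> m \<le> ord s S \<and> x = s - m * e \<and> m * e \<le> s"
proof (induction x rule: monoid_gen.induct)
  case zero
  then show ?case using zeroS by (intro exI[of _ 0]) auto
next
  case (step x a)
  then obtain s m where sm: "s \<in> S" "m \<le> ord s S" "x = s - m * e" "m * e \<le> s" by blast
  show ?case
  proof (cases "a = e")
    case True
    have "s + e \<in> S" using sm e_prop addS by blast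
    moreover have "m \<le> ord (s + e) S" using ord_gen[OF sm(1) e_mg] sm(2) by simp
    ultimately show ?thesis using sm True by (intro exI[of _ "s + e"] exI[of _ m]) auto
  next
    case False
    then obtain g where g: "g \<in> min_gens S" "a = g - e" using step.hyps(2) unfolding A_def by auto
    have "s + g \<in> S" using sm g mg_S addS by blast
    moreover have "m + 1 \<le> ord (s + g) S" using ord_gen[OF sm(1) g(1)] sm(2) by simp
    moreover have "x + a = (s + g) - (m + 1) * e" "(m+1) * e \<le> s + g"
      using sm g mg_ge[OF g(1)] by auto
    ultimately show ?thesis by blast
  qed
qed

lemma add_iter: "additive S \<Longrightarrow> u \<in> S \<Longrightarrow> ord (u + k * e) S = ord u S + k"
proof (induction k)
  case 0 then show ?case by simp
next
  case (Suc k)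
  have "u + k * e \<in> S" using Suc.prems keS addS by blast
  then have "ord (u + k * e + e) S = ord (u + k * e) S + 1"
    using Suc.prems(1) unfolding additive_def mult_e by blast
  moreover have eq: "u + Suc k * e = u + k * e + e" by simp
  ultimately show ?case using Suc by (simp only: eq)
qed

end

theorem proposition4p7:
  fixes S :: "nat set"
  assumes "numerical_semigroup S"
  shows "additive S \<longleftrightarrow> adj S = apery (blowup S) (multiplicity S)"
proof -
  interpret nsg S using assms by unfold_locales
  have adjE: "adj S = {s - ord s S * e | s. s \<in> S}" unfolding adj_def mult_e ..
  show ?thesis
    unfolding adjE blowup_eq mult_e
  proof
    assume add: "additive S"
    show "{s - ord s S * e | s. s \<in> S} = apery (monoid_gen A) e"
    proof
      show "{s - ord s S * e | s. s \<in> S} \<subseteq> apery (monoid_gen A) e"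
      proof
        fix x assume "x \<in> {s - ord s S * e | s. s \<in> S}"
        then obtain s where s: "s \<in> S" "x = s - ord s S * e" by auto
        define r where "r = ord s S"
        have xB: "x \<in> monoid_gen A" using B_intro[OF s(1)] s by simp
        have "\<not> (e \<le> x \<and> x - e \<in> monoid_gen A)"
        proof
          assume h: "e \<le> x \<and> x - e \<in> monoid_gen A"
          then obtain y m where y: "y \<in> S" "m \<le> ord y S" "x - e = y - m * e" "m * e \<le> y"
            using B_elim by blast
          have re: "r * e \<le> s" using ord_le[OF s(1)] r_def by simp
          have x1: "s - r * e - e = y - m * e" using y(3) s(2) r_def by simp
          have x2: "e \<le> s - r * e" using h s(2) r_def by simp
          have "s + m * e = y + (r * e + e)"
            using nat_lem[OF x1 y(4) x2 re] .
          then have eq: "s + m * e = y + (r + 1) * e" by (simp add: add.commute)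
          show False
          proof (cases "m \<le> r + 1")
            case True
            have "(r + 1) * e = m * e + (r + 1 - m) * e" using True
              by (metis add_mult_distrib le_add_diff_inverse)
            then have "s = y + (r + 1 - m) * e" using eq by simp
            then have "ord s S = ord y S + (r + 1 - m)" using add_iter[OF add y(1)] by simp
            then show False using y(2) True r_def by simp
          next
            case False
            have "m * e = (r + 1) * e + (m - (r + 1)) * e" using False
              by (metis add_mult_distrib le_add_diff_inverse nat_le_linear)
            then have "y = s + (m - (r + 1)) * e" using eq by simp
            then have "ord y S = ord s S + (m - (r + 1))" using add_iter[OF add s(1)] by simp
            then show False using y(2) False r_def by simp
          qed
        qed
        then show "x \<in> apery (monoid_gen A) e" using xB unfolding apery_def by simp
      qed
    next
      show "apery (monoid_gen A) e \<subseteq> {s - ord s S * e | s. s \<in> S}"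
      proof
        fix w assume w: "w \<in> apery (monoid_gen A) e"
        then have wB: "w \<in> monoid_gen A" and na: "\<not> (e \<le> w \<and> w - e \<in> monoid_gen A)"
          unfolding apery_def by auto
        obtain s m where sm: "s \<in> S" "m \<le> ord s S" "w = s - m * e" "m * e \<le> s"
          using B_elim[OF wB] by blast
        have "m = ord s S"
        proof (rule ccontr)
          assume "m \<noteq> ord s S"
          then have lt: "m + 1 \<le> ord s S" using sm(2) by simp
          have "(m + 1) * e \<le> ord s S * e" using mult_le_mono1[OF lt, of e] .
          then have le: "(m + 1) * e \<le> s" using ord_le[OF sm(1)] by simp
          have "w - e = s - (m + 1) * e" using sm(3) by simp
          moreover have "e \<le> w" using le sm(3) by simp
          moreover have "s - (m + 1) * e \<in> monoid_gen A" using B_intro[OF sm(1) lt] .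
          ultimately show False using na by simp
        qed
        then show "w \<in> {s - ord s S * e | s. s \<in> S}" using sm by auto
      qed
    qed
  next
    assume eqs: "{s - ord s S * e | s. s \<in> S} = apery (monoid_gen A) e"
    show "additive S"
      unfolding additive_def mult_e
    proof
      fix u assume u: "u \<in> S"
      have ue: "u + e \<in> S" using u e_prop addS by blast
      have ge: "ord u S + 1 \<le> ord (u + e) S" using ord_gen[OF u e_mg] .
      show "ord (u + e) S = ord u S + 1"
      proof (rule ccontr)
        assume "ord (u + e) S \<noteq> ord u S + 1"
        then have lt: "ord u S + 2 \<le> ord (u + e) S" using ge by simp
        define x where "x = u - ord u S * e"
        have "x \<in> apery (monoid_gen A) e" using eqs u x_def by blast
        then have na: "\<not> (e \<le> x \<and> x - e \<in> monoid_gen A)" unfolding apery_def by auto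
        have "(ord u S + 2) * e \<le> ord (u + e) S * e" using mult_le_mono1[OF lt, of e] .
        then have le: "(ord u S + 2) * e \<le> u + e" using ord_le[OF ue] by simp
        have "e \<le> x" using le x_def by simp
        moreover have "x - e = (u + e) - (ord u S + 2) * e" using x_def by simp
        moreover have "(u + e) - (ord u S + 2) * e \<in> monoid_gen A" using B_intro[OF ue lt] .
        ultimately show False using na by simp
      qed
    qed
  qed
qed

end
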